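(* Let $P_n$ be the path graph on vertices $1,2,\dots,n$ (edges $\{i,i+1\}$, $1\le i<n$), and consider the averaging process on $P_n$ started at the endpoint vector $v(0)=e_1$. For every fixed $\epsilon\in(0,1)$, the time $\min\{t\in\mathbb N:\mathbb E\|v(t)-\bar v\|_1\le\epsilon\}$ is $\Theta_\epsilon(n^3)$; i.e., it lies between $c_\epsilon n^3$ and $C_\epsilon n^3$ for constants $0<c_\epsilon\le C_\epsilon$ depending only on $\epsilon$.
   Context: The averaging process on a finite, undirected, connected graph $G=(V,E)$, $V=\{1,\dots,n\}$: the state vector $v(t)\in\mathbb R^n$, $t=0,1,2,\dots$, starts from a given $v(0)$; at each step $t\ge 1$ an edge $\{i,j\}\in E$ is chosen uniformly at random (independently of all previous choices) and both $v_i$ and $v_j$ are replaced by $(v_i+v_j)/2$, all other coordinates unchanged. Here $\bar v=\frac1n\mathbf 1$ and $e_1$ is the first standard basis vector. *)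

theory Defs
  imports Complex_Main
begin

text \<open>Path graph P_n on vertices 1..n; edge number i (1 <= i < n) is {i, i+1}.
  State vectors are functions nat => real, only coordinates 1..n matter.\<close>

definition path_edges :: "nat \<Rightarrow> nat set" where
  "path_edges n = {1..<n}"

definition avg_step :: "nat \<Rightarrow> (nat \<Rightarrow> real) \<Rightarrow> (nat \<Rightarrow> real)" where
  "avg_step i v = v(i := (v i + v (Suc i)) / 2, Suc i := (v i + v (Suc i)) / 2)"

definition run_avg :: "nat list \<Rightarrow> (nat \<Rightarrow> real) \<Rightarrow> (nat \<Rightarrow> real)" where
  "run_avg es v = foldl (\<lambda>w i. avg_step i w) v es"

definition e1 :: "nat \<Rightarrow> real" where
  "e1 = (\<lambda>j. if j = 1 then 1 else 0)"

definition dist1_bar :: "nat \<Rightarrow> (nat \<Rightarrow> real) \<Rightarrow> real" where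
  "dist1_bar n v = (\<Sum>j\<in>{1..n}. \<bar>v j - 1 / real n\<bar>)"

text \<open>All possible edge sequences of length t (each equally likely, probability (n-1)^(-t)).\<close>
definition edge_seqs :: "nat \<Rightarrow> nat \<Rightarrow> nat list set" where
  "edge_seqs n t = {es. set es \<subseteq> path_edges n \<and> length es = t}"

definition exp_dist :: "nat \<Rightarrow> nat \<Rightarrow> real" where
  "exp_dist n t = (\<Sum>es\<in>edge_seqs n t. dist1_bar n (run_avg es e1)) / real (card (path_edges n)) ^ t"

definition mix_time :: "nat \<Rightarrow> real \<Rightarrow> nat" where
  "mix_time n \<epsilon> = (LEAST t. exp_dist n t \<le> \<epsilon>)"

end

theory Submission
  imports Defs
begin

definition good :: "nat \<Rightarrow> (nat \<Rightarrow> real) \<Rightarrow> bool" where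
  "good n v \<longleftrightarrow> (\<forall>j\<in>{1..n}. 0 \<le> v j) \<and> (\<Sum>j=1..n. v j) = 1"

definition EAvg :: "nat \<Rightarrow> nat \<Rightarrow> ((nat \<Rightarrow> real) \<Rightarrow> real) \<Rightarrow> real" where
  "EAvg n t F = (\<Sum>es\<in>edge_seqs n t. F (run_avg es e1)) / real (n - 1) ^ t"

lemma run_avg_Cons: "run_avg (i # es) v = run_avg es (avg_step i v)"
  by (simp add: run_avg_def)

lemma run_avg_snoc: "run_avg (es @ [i]) v = avg_step i (run_avg es v)"
  by (simp add: run_avg_def)

lemma finite_edge_seqs: "finite (edge_seqs n t)"
  unfolding edge_seqs_def path_edges_def by (rule finite_lists_length_eq) simp

lemma card_edge_seqs: "card (edge_seqs n t) = (n - 1) ^ t"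
  unfolding edge_seqs_def path_edges_def by (subst card_lists_length_eq) simp_all

lemma card_path_edges: "card (path_edges n) = n - 1"
  by (simp add: path_edges_def)

lemma edge_seqs_Suc:
  "edge_seqs n (Suc t) = (\<lambda>(es, i). es @ [i]) ` (edge_seqs n t \<times> path_edges n)"
proof
  show "(\<lambda>(es, i). es @ [i]) ` (edge_seqs n t \<times> path_edges n) \<subseteq> edge_seqs n (Suc t)"
    by (auto simp: edge_seqs_def)
next
  show "edge_seqs n (Suc t) \<subseteq> (\<lambda>(es, i). es @ [i]) ` (edge_seqs n t \<times> path_edges n)"
  proof
    fix xs assume xs: "xs \<in> edge_seqs n (Suc t)"
    then have ne: "xs \<noteq> []" by (auto simp: edge_seqs_def)
    have eq: "xs = butlast xs @ [last xs]" using ne by simp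
    have "butlast xs \<in> edge_seqs n t" using xs
      by (auto simp: edge_seqs_def dest: in_set_butlastD)
    moreover have "last xs \<in> path_edges n" using xs ne
      by (auto simp: edge_seqs_def)
    ultimately show "xs \<in> (\<lambda>(es, i). es @ [i]) ` (edge_seqs n t \<times> path_edges n)"
      using eq by (auto intro!: image_eqI[where x="(butlast xs, last xs)"])
  qed
qed

lemma sum_edge_seqs_Suc:
  "(\<Sum>es\<in>edge_seqs n (Suc t). f es) = (\<Sum>es\<in>edge_seqs n t. \<Sum>i\<in>path_edges n. f (es @ [i]))"
proof -
  have inj: "inj_on (\<lambda>(es, i). es @ [i]) (edge_seqs n t \<times> path_edges n)"
    by (auto simp: inj_on_def)
  have "(\<Sum>es\<in>edge_seqs n (Suc t). f es) = (\<Sum>p\<in>edge_seqs n t \<times> path_edges n. f (fst p @ [snd p]))"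
    unfolding edge_seqs_Suc by (subst sum.reindex[OF inj]) (simp add: case_prod_beta)
  also have "\<dots> = (\<Sum>es\<in>edge_seqs n t. \<Sum>i\<in>path_edges n. f (es @ [i]))"
    by (simp add: sum.cartesian_product case_prod_beta)
  finally show ?thesis .
qed

lemma avg_step_good:
  assumes "good n v" "i \<in> {1..<n}"
  shows "good n (avg_step i v)"
proof -
  have i: "1 \<le> i" "Suc i \<le> n" using assms(2) by auto
  have "(\<Sum>j=1..n. avg_step i v j) - (\<Sum>j=1..n. v j) = (\<Sum>j=1..n. avg_step i v j - v j)"
    by (simp add: sum_subtractf)
  also have "\<dots> = (\<Sum>j\<in>{i, Suc i}. avg_step i v j - v j)"
    by (rule sum.mono_neutral_right) (use i in \<open>auto simp: avg_step_def\<close>)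
  also have "\<dots> = 0" by (simp add: avg_step_def field_simps)
  finally show ?thesis using assms i unfolding good_def
    by (auto simp: avg_step_def)
qed

lemma run_good:
  assumes "good n v" "set es \<subseteq> {1..<n}"
  shows "good n (run_avg es v)"
  using assms
proof (induction es arbitrary: v)
  case Nil thus ?case by (simp add: run_avg_def)
next
  case (Cons i es)
  thus ?case by (simp add: run_avg_Cons avg_step_good)
qed

lemma e1_good: "n \<ge> 1 \<Longrightarrow> good n e1"
proof -
  assume n: "n \<ge> 1"
  have "(\<Sum>j=1..n. e1 j) = (\<Sum>j\<in>{1}. e1 j)"
    by (rule sum.mono_neutral_right) (use n in \<open>auto simp: e1_def\<close>)
  thus ?thesis by (simp add: good_def e1_def)
qed

lemma EAvg_Suc:
  assumes "n \<ge> 2"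
  shows "EAvg n (Suc t) F = EAvg n t (\<lambda>v. (\<Sum>i\<in>{1..<n}. F (avg_step i v)) / real (n - 1))"
  using assms
  by (simp add: EAvg_def sum_edge_seqs_Suc run_avg_snoc path_edges_def sum_divide_distrib[symmetric]
      field_simps)

lemma EAvg_lin:
  assumes "n \<ge> 2"
  shows "EAvg n t (\<lambda>v. a * F v + b) = a * EAvg n t F + b"
proof -
  have c: "real (card (edge_seqs n t)) = real (n - 1) ^ t" by (simp add: card_edge_seqs)
  have nz: "real (n - 1) ^ t \<noteq> 0" using assms by simp
  show ?thesis
    unfolding EAvg_def using c nz
    by (simp add: sum.distrib sum_distrib_left[symmetric] field_simps)
qed

lemma EAvg_mono:
  assumes "n \<ge> 2" "\<And>v. good n v \<Longrightarrow> F v \<le> G v"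
  shows "EAvg n t F \<le> EAvg n t G"
proof -
  have "(\<Sum>es\<in>edge_seqs n t. F (run_avg es e1)) \<le> (\<Sum>es\<in>edge_seqs n t. G (run_avg es e1))"
  proof (rule sum_mono)
    fix es assume "es \<in> edge_seqs n t"
    hence "good n (run_avg es e1)" using assms(1) 
      by (intro run_good e1_good) (auto simp: edge_seqs_def path_edges_def)
    thus "F (run_avg es e1) \<le> G (run_avg es e1)" by (rule assms(2))
  qed
  thus ?thesis unfolding EAvg_def by (simp add: divide_right_mono)
qed

lemma exp_dist_Ex: "exp_dist n t = EAvg n t (dist1_bar n)"
  by (simp add: exp_dist_def EAvg_def card_path_edges)

lemma sum_avg_step:
  fixes g :: "nat \<Rightarrow> real \<Rightarrow> real"
  assumes "1 \<le> i" "i < n"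
  shows "(\<Sum>j=1..n. g j (avg_step i v j)) = (\<Sum>j=1..n. g j (v j))
     + (g i ((v i + v (Suc i)) / 2) + g (Suc i) ((v i + v (Suc i)) / 2) - g i (v i) - g (Suc i) (v (Suc i)))"
proof -
  have "(\<Sum>j=1..n. g j (avg_step i v j)) - (\<Sum>j=1..n. g j (v j)) = (\<Sum>j=1..n. g j (avg_step i v j) - g j (v j))"
    by (rule sum_subtractf[symmetric])
  also have "\<dots> = (\<Sum>j\<in>{i, Suc i}. g j (avg_step i v j) - g j (v j))"
    by (rule sum.mono_neutral_right) (use assms in \<open>auto simp: avg_step_def\<close>)
  also have "\<dots> = g i ((v i + v (Suc i)) / 2) + g (Suc i) ((v i + v (Suc i)) / 2) - g i (v i) - g (Suc i) (v (Suc i))"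
    by (simp add: avg_step_def)
  finally show ?thesis by simp
qed

definition Phi :: "nat \<Rightarrow> (nat \<Rightarrow> real) \<Rightarrow> real" where
  "Phi n v = (\<Sum>j=1..n. (real j - 1)^2 * v j)"

definition Yf :: "nat \<Rightarrow> (nat \<Rightarrow> real) \<Rightarrow> real" where
  "Yf n v = (\<Sum>j=1..n. (v j - 1 / real n)^2)"

definition Dir :: "nat \<Rightarrow> (nat \<Rightarrow> real) \<Rightarrow> real" where
  "Dir n v = (\<Sum>i=1..<n. (v i - v (Suc i))^2)"

lemma Phi_step:
  assumes "1 \<le> i" "i < n"
  shows "Phi n (avg_step i v) = Phi n v + (2 * real i - 1) * (v i - v (Suc i)) / 2"
  unfolding Phi_def
  by (subst sum_avg_step[OF assms, where g="\<lambda>j x. (real j - 1)^2 * x"]) (simp add: field_simps power2_eq_square)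

lemma Yf_step:
  assumes "1 \<le> i" "i < n"
  shows "Yf n (avg_step i v) = Yf n v - (v i - v (Suc i))^2 / 2"
  unfolding Yf_def using assms
  by (subst sum_avg_step[OF assms, where g="\<lambda>j x. (x - 1 / real n)^2"]) (simp add: field_simps power2_eq_square)

lemma telescope_aux:
  "n \<ge> 1 \<Longrightarrow> (\<Sum>i=1..<n. (2 * real i - 1) * (v i - v (Suc i))) = 2 * (\<Sum>j=1..<n. v j) - v 1 - (2 * real n - 3) * v n"
proof (induction n rule: dec_induct)
  case base thus ?case by simp
next
  case (step m)
  thus ?case by (simp add: algebra_simps)
qed

lemma Phi_sum_step:
  assumes "good n v" "n \<ge> 2"
  shows "(\<Sum>i=1..<n. Phi n (avg_step i v)) \<le> real (n - 1) * Phi n v + 1"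
proof -
  have "(\<Sum>i=1..<n. Phi n (avg_step i v)) = (\<Sum>i=1..<n. Phi n v + (2 * real i - 1) * (v i - v (Suc i)) / 2)"
    by (rule sum.cong) (auto simp: Phi_step)
  also have "\<dots> = real (n - 1) * Phi n v + (\<Sum>i=1..<n. (2 * real i - 1) * (v i - v (Suc i))) / 2"
    by (simp add: sum.distrib sum_divide_distrib)
  also have "(\<Sum>i=1..<n. (2 * real i - 1) * (v i - v (Suc i))) = 2 * (\<Sum>j=1..<n. v j) - v 1 - (2 * real n - 3) * v n"
    using assms by (intro telescope_aux) auto
  also have "\<dots> \<le> 2"
  proof -
    have "v 1 \<ge> 0" "v n \<ge> 0" using assms by (auto simp: good_def)
    moreover have "2 * real n - 3 \<ge> 0" using assms by simp
    moreover have "(\<Sum>j=1..<n. v j) \<le> (\<Sum>j=1..n. v j)"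
      by (rule sum_mono2) (use assms in \<open>auto simp: good_def\<close>)
    ultimately show ?thesis using assms(1) unfolding good_def
      by (smt (verit) mult_nonneg_nonneg)
  qed
  finally show ?thesis by simp
qed

lemma Yf_sum_step:
  assumes "n \<ge> 2"
  shows "(\<Sum>i=1..<n. Yf n (avg_step i v)) = real (n - 1) * Yf n v - Dir n v / 2"
proof -
  have "(\<Sum>i=1..<n. Yf n (avg_step i v)) = (\<Sum>i=1..<n. Yf n v - (v i - v (Suc i))^2 / 2)"
    by (rule sum.cong) (auto simp: Yf_step)
  thus ?thesis by (simp add: sum_subtractf sum_divide_distrib Dir_def)
qed

lemma dist_lower:
  assumes "good n v" "n \<ge> 1" "R > 0"
  shows "dist1_bar n v \<ge> 2 - 2 * real (nat \<lceil>R\<rceil>) / real n - 2 * Phi n v / R^2"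
proof -
  define A where "A = {j\<in>{1..n}. real j - 1 < R}"
  define B where "B = {1..n} - A"
  have fin: "finite A" "finite B" by (auto simp: A_def B_def)
  have AB: "A \<union> B = {1..n}" "A \<inter> B = {}" by (auto simp: A_def B_def)
  have cA: "card A \<le> nat \<lceil>R\<rceil>"
  proof -
    have "A \<subseteq> (\<lambda>d. d + 1) ` {..<nat \<lceil>R\<rceil>}"
    proof
      fix j assume j: "j \<in> A"
      hence "real (j - 1) < R" "j \<ge> 1" by (auto simp: A_def)
      hence "j - 1 < nat \<lceil>R\<rceil>" by linarith
      thus "j \<in> (\<lambda>d. d + 1) ` {..<nat \<lceil>R\<rceil>}" using \<open>j \<ge> 1\<close>
        by (intro image_eqI[where x="j - 1"]) auto
    qed
    hence "card A \<le> card ((\<lambda>d. d + 1) ` {..<nat \<lceil>R\<rceil>})" by (rule card_mono[rotated]) auto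
    also have "\<dots> \<le> nat \<lceil>R\<rceil>" using card_image_le[of "{..<nat \<lceil>R\<rceil>}" "\<lambda>d. d + 1"] by simp
    finally show ?thesis .
  qed
  have cAB: "card A + card B = n"
    using card_Un_disjoint[OF fin AB(2)] AB(1) by simp
  have vAB: "(\<Sum>j\<in>A. v j) + (\<Sum>j\<in>B. v j) = 1"
    using sum.union_disjoint[OF fin AB(2), of v] AB(1) assms(1) by (simp add: good_def)
  have nn: "\<And>j. j \<in> {1..n} \<Longrightarrow> v j \<ge> 0" using assms(1) by (simp add: good_def)
  have dsplit: "dist1_bar n v = (\<Sum>j\<in>A. \<bar>v j - 1 / real n\<bar>) + (\<Sum>j\<in>B. \<bar>v j - 1 / real n\<bar>)"
    unfolding dist1_bar_def using sum.union_disjoint[OF fin AB(2), of "\<lambda>j. \<bar>v j - 1 / real n\<bar>"] AB(1)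
    by simp
  have dA: "(\<Sum>j\<in>A. \<bar>v j - 1 / real n\<bar>) \<ge> (\<Sum>j\<in>A. v j) - real (card A) / real n"
  proof -
    have "(\<Sum>j\<in>A. \<bar>v j - 1 / real n\<bar>) \<ge> (\<Sum>j\<in>A. v j - 1 / real n)" by (rule sum_mono) simp
    thus ?thesis by (simp add: sum_subtractf)
  qed
  have dB: "(\<Sum>j\<in>B. \<bar>v j - 1 / real n\<bar>) \<ge> real (card B) / real n - (\<Sum>j\<in>B. v j)"
  proof -
    have "(\<Sum>j\<in>B. \<bar>v j - 1 / real n\<bar>) \<ge> (\<Sum>j\<in>B. 1 / real n - v j)" by (rule sum_mono) simp
    thus ?thesis by (simp add: sum_subtractf)
  qed
  have sB: "(\<Sum>j\<in>B. v j) \<le> Phi n v / R^2"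
  proof -
    have "(\<Sum>j\<in>B. v j) \<le> (\<Sum>j\<in>B. (real j - 1)^2 * v j / R^2)"
    proof (rule sum_mono)
      fix j assume j: "j \<in> B"
      hence "R \<le> real j - 1" "v j \<ge> 0" using nn by (auto simp: A_def B_def)
      hence "R^2 \<le> (real j - 1)^2" using assms(3) by (intro power_mono) auto
      hence "1 \<le> (real j - 1)^2 / R^2" using assms(3) by simp
      hence "1 * v j \<le> (real j - 1)^2 / R^2 * v j" using \<open>v j \<ge> 0\<close> by (rule mult_right_mono)
      thus "v j \<le> (real j - 1)^2 * v j / R^2" by simp
    qed
    also have "\<dots> = (\<Sum>j\<in>B. (real j - 1)^2 * v j) / R^2" by (simp add: sum_divide_distrib)
    also have "(\<Sum>j\<in>B. (real j - 1)^2 * v j) \<le> Phi n v"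
      unfolding Phi_def by (rule sum_mono2) (auto simp: B_def nn)
    hence "(\<Sum>j\<in>B. (real j - 1)^2 * v j) / R^2 \<le> Phi n v / R^2" by (simp add: divide_right_mono)
    finally show ?thesis .
  qed
  have n0: "real n > 0" using assms by simp
  have "real (card B) = real n - real (card A)" using cAB by linarith
  hence "real (card B) / real n = 1 - real (card A) / real n" using n0 by (simp add: field_simps)
  moreover have "real (card A) / real n \<le> real (nat \<lceil>R\<rceil>) / real n"
    using cA n0 by (simp add: divide_right_mono)
  ultimately show ?thesis using dsplit dA dB sB vAB by linarith
qed

lemma EAvg_Phi:
  assumes "n \<ge> 2"
  shows "EAvg n t (Phi n) \<le> real t / real (n - 1)"
proof (induction t)
  case 0
  have "Phi n e1 = 0" unfolding Phi_def by (rule sum.neutral) (auto simp: e1_def)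
  thus ?case by (simp add: EAvg_def edge_seqs_def run_avg_def)
next
  case (Suc t)
  have m: "real (n - 1) > 0" using assms by simp
  have "EAvg n (Suc t) (Phi n) = EAvg n t (\<lambda>v. (\<Sum>i\<in>{1..<n}. Phi n (avg_step i v)) / real (n - 1))"
    by (rule EAvg_Suc[OF assms])
  also have "\<dots> \<le> EAvg n t (\<lambda>v. 1 * Phi n v + 1 / real (n - 1))"
  proof (rule EAvg_mono[OF assms])
    fix v assume "good n v"
    from Phi_sum_step[OF this assms] m
    have "(\<Sum>i\<in>{1..<n}. Phi n (avg_step i v)) / real (n - 1) \<le> (real (n - 1) * Phi n v + 1) / real (n - 1)"
      by (intro divide_right_mono) auto
    also have "\<dots> = 1 * Phi n v + 1 / real (n - 1)" using m by (simp add: add_divide_distrib)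
    finally show "(\<Sum>i\<in>{1..<n}. Phi n (avg_step i v)) / real (n - 1) \<le> 1 * Phi n v + 1 / real (n - 1)" .
  qed
  also have "\<dots> = EAvg n t (Phi n) + 1 / real (n - 1)" by (subst EAvg_lin[OF assms]) simp
  also have "\<dots> \<le> real t / real (n - 1) + 1 / real (n - 1)" using Suc by simp
  finally show ?case by (simp add: add_divide_distrib)
qed

lemma exp_dist_lower:
  assumes "n \<ge> 2" "R > 0"
  shows "exp_dist n t \<ge> 2 - 2 * real (nat \<lceil>R\<rceil>) / real n - 2 * (real t / real (n - 1)) / R^2"
proof -
  have "EAvg n t (\<lambda>v. (- 2 / R^2) * Phi n v + (2 - 2 * real (nat \<lceil>R\<rceil>) / real n)) \<le> EAvg n t (dist1_bar n)"
    by (rule EAvg_mono[OF assms(1)]) (use dist_lower assms in auto)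
  moreover have "EAvg n t (\<lambda>v. (- 2 / R^2) * Phi n v + (2 - 2 * real (nat \<lceil>R\<rceil>) / real n))
      = (- 2 / R^2) * EAvg n t (Phi n) + (2 - 2 * real (nat \<lceil>R\<rceil>) / real n)"
    by (rule EAvg_lin[OF assms(1)])
  moreover have "(2 / R^2) * EAvg n t (Phi n) \<le> (2 / R^2) * (real t / real (n - 1))"
    using EAvg_Phi[OF assms(1)] assms(2) by (intro mult_left_mono) auto
  ultimately show ?thesis unfolding exp_dist_Ex by (simp add: mult.commute)
qed

lemma cs_sum:
  fixes a :: "'a \<Rightarrow> real"
  assumes "finite I"
  shows "(\<Sum>i\<in>I. a i)^2 \<le> real (card I) * (\<Sum>i\<in>I. (a i)^2)"
proof (cases "I = {}")
  case True thus ?thesis by simp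
next
  case False
  define c where "c = real (card I)"
  define S where "S = (\<Sum>i\<in>I. a i)"
  define \<mu> where "\<mu> = S / c"
  have c: "c > 0" using False assms by (simp add: c_def card_gt_0_iff)
  have "(\<Sum>i\<in>I. 2 * \<mu> * a i - \<mu>^2) \<le> (\<Sum>i\<in>I. (a i)^2)"
  proof (rule sum_mono)
    fix i show "2 * \<mu> * a i - \<mu>^2 \<le> (a i)^2" using sum_squares_ge_zero[of "a i - \<mu>" 0]
      by (simp add: power2_eq_square algebra_simps)
  qed
  moreover have "(\<Sum>i\<in>I. 2 * \<mu> * a i - \<mu>^2) = 2 * \<mu> * S - c * \<mu>^2"
    by (simp add: sum_subtractf sum_distrib_left S_def c_def)
  moreover have "2 * \<mu> * S - c * \<mu>^2 = S^2 / c" using c by (simp add: \<mu>_def field_simps power2_eq_square)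
  ultimately have "S^2 / c \<le> (\<Sum>i\<in>I. (a i)^2)" by simp
  hence "S^2 \<le> c * (\<Sum>i\<in>I. (a i)^2)" using c by (simp add: field_simps)
  thus ?thesis by (simp add: S_def c_def)
qed

lemma tele_bound:
  assumes "a \<le> b"
  shows "(v a - v b)^2 \<le> real (b - a) * (\<Sum>i\<in>{a..<b}. (v i - v (Suc i))^2)"
proof -
  have "v b - v a = (\<Sum>i\<in>{a..<b}. v (Suc i) - v i)" using sum_Suc_diff'[OF assms, of v] by simp
  hence "(v a - v b)^2 = (\<Sum>i\<in>{a..<b}. v i - v (Suc i))^2"
    by (simp add: sum_subtractf) (metis minus_diff_eq power2_minus)
  also have "\<dots> \<le> real (card {a..<b}) * (\<Sum>i\<in>{a..<b}. (v i - v (Suc i))^2)" by (rule cs_sum) simp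
  finally show ?thesis by simp
qed

lemma tele_Dir:
  assumes "k \<in> {1..n}" "l \<in> {1..n}"
  shows "(v k - v l)^2 \<le> \<bar>real k - real l\<bar> * Dir n v"
proof -
  have D0: "Dir n v \<ge> 0" unfolding Dir_def by (rule sum_nonneg) simp
  have gen: "(v a - v b)^2 \<le> real (b - a) * Dir n v" if "a \<le> b" "a \<in> {1..n}" "b \<in> {1..n}" for a b
  proof -
    have "(\<Sum>i\<in>{a..<b}. (v i - v (Suc i))^2) \<le> Dir n v"
      unfolding Dir_def by (rule sum_mono2) (use that in auto)
    hence "real (b - a) * (\<Sum>i\<in>{a..<b}. (v i - v (Suc i))^2) \<le> real (b - a) * Dir n v"
      by (rule mult_left_mono) simp
    thus ?thesis using tele_bound[OF that(1), of v] by linarith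
  qed
  show ?thesis
  proof (cases "k \<le> l")
    case True thus ?thesis using gen[OF True assms] by (simp add: of_nat_diff)
  next
    case False
    hence "l \<le> k" by simp
    thus ?thesis using gen[OF \<open>l \<le> k\<close> assms(2) assms(1)] by (simp add: of_nat_diff power2_commute)
  qed
qed

lemma nash:
  assumes "good n v" "n \<ge> 2"
  shows "(Yf n v)^3 \<le> 128 * Dir n v"
proof -
  define x where "x j = v j - 1 / real n" for j
  define D where "D = Dir n v"
  have D0: "D \<ge> 0" unfolding D_def Dir_def by (rule sum_nonneg) simp
  have n0: "real n > 0" using assms by simp
  have nn: "\<And>j. j \<in> {1..n} \<Longrightarrow> v j \<ge> 0" using assms(1) by (simp add: good_def)
  have sumx: "(\<Sum>j=1..n. x j) = 0"
    using assms(1) n0 by (simp add: x_def sum_subtractf good_def)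
  have L1: "(\<Sum>j=1..n. \<bar>x j\<bar>) \<le> 2"
  proof -
    have "(\<Sum>j=1..n. \<bar>x j\<bar>) \<le> (\<Sum>j=1..n. v j + 1 / real n)"
    proof (rule sum_mono)
      fix j assume "j \<in> {1..n}"
      hence "v j \<ge> 0" by (rule nn)
      moreover have "1 / real n > 0" using n0 by simp
      ultimately show "\<bar>x j\<bar> \<le> v j + 1 / real n" unfolding x_def by linarith
    qed
    also have "\<dots> = 2" using assms(1) n0 by (simp add: sum.distrib good_def)
    finally show ?thesis .
  qed
  define M where "M = Max ((\<lambda>j. \<bar>x j\<bar>) ` {1..n})"
  have "M \<in> (\<lambda>j. \<bar>x j\<bar>) ` {1..n}" unfolding M_def using assms by (intro Max_in) auto
  then obtain k where k: "k \<in> {1..n}" "\<bar>x k\<bar> = M" by (auto simp: M_def)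
  have Mge: "\<And>j. j \<in> {1..n} \<Longrightarrow> \<bar>x j\<bar> \<le> M" unfolding M_def by (intro Max_ge) auto
  have M0: "M \<ge> 0" using k by auto
  have Y2M: "Yf n v \<le> 2 * M"
  proof -
    have "Yf n v = (\<Sum>j=1..n. \<bar>x j\<bar> * \<bar>x j\<bar>)" by (simp add: Yf_def x_def power2_eq_square)
    also have "\<dots> \<le> (\<Sum>j=1..n. M * \<bar>x j\<bar>)"
    proof (rule sum_mono)
      fix j assume "j \<in> {1..n}"
      hence "\<bar>x j\<bar> \<le> M" by (rule Mge)
      thus "\<bar>x j\<bar> * \<bar>x j\<bar> \<le> M * \<bar>x j\<bar>" by (rule mult_right_mono) simp
    qed
    also have "\<dots> = M * (\<Sum>j=1..n. \<bar>x j\<bar>)" by (simp add: sum_distrib_left)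
    also have "\<dots> \<le> M * 2" using L1 M0 by (rule mult_left_mono)
    finally show ?thesis by simp
  qed
  have Y0: "Yf n v \<ge> 0" unfolding Yf_def by (rule sum_nonneg) simp
  have key: "M^3 \<le> 16 * D"
  proof (rule ccontr)
    assume "\<not> M^3 \<le> 16 * D"
    hence lt: "16 * D < M^3" by simp
    have Mpos: "M > 0" using lt D0 M0 by (cases "M = 0") auto
    define W where "W = {l\<in>{1..n}. \<bar>real k - real l\<bar> * D < M^2 / 4}"
    have inW: "\<bar>x l\<bar> > M / 2 \<and> x l * x k > 0" if l: "l \<in> W" for l
    proof -
      have lin: "l \<in> {1..n}" using l by (simp add: W_def)
      have "(x k - x l)^2 = (v k - v l)^2" by (simp add: x_def)
      also have "\<dots> \<le> \<bar>real k - real l\<bar> * D" unfolding D_def by (rule tele_Dir[OF k(1) lin])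
      also have "\<dots> < M^2 / 4" using l by (simp add: W_def)
      also have "\<dots> = (M / 2)^2" by (simp add: power2_eq_square)
      finally have "(x k - x l)^2 < (M / 2)^2" .
      hence "\<bar>x k - x l\<bar>^2 < (M / 2)^2" by simp
      hence lt2: "\<bar>x k - x l\<bar> < M / 2" by (rule power2_less_imp_less) (use Mpos in simp)
      have "(x l > M / 2 \<and> x k > 0) \<or> (x l < - (M / 2) \<and> x k < 0)"
      proof (cases "x k \<ge> 0")
        case True
        hence xk: "x k = M" using k(2) by simp
        hence "x l > M / 2" using lt2 unfolding abs_less_iff by linarith
        thus ?thesis using Mpos xk by simp
      next
        case False
        hence xk: "x k = - M" using k(2) by simp
        hence "x l < - (M / 2)" using lt2 unfolding abs_less_iff by linarith
        thus ?thesis using Mpos xk by simp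
      qed
      thus ?thesis using Mpos by (auto simp: mult_pos_pos mult_neg_neg)
    qed
    show False
    proof (cases "{1..n} \<subseteq> W")
      case True
      show False
      proof (cases "x k > 0")
        case True
        have "\<And>l. l \<in> {1..n} \<Longrightarrow> x l > 0"
        proof -
          fix l assume "l \<in> {1..n}"
          hence "x l * x k > 0" using inW \<open>{1..n} \<subseteq> W\<close> by auto
          thus "x l > 0" using True by (simp add: zero_less_mult_iff)
        qed
        hence "(\<Sum>j=1..n. x j) > 0" using assms by (intro sum_pos) auto
        thus False using sumx by simp
      next
        case False
        have "\<And>l. l \<in> {1..n} \<Longrightarrow> x l < 0"
        proof -
          fix l assume "l \<in> {1..n}"
          hence "x l * x k > 0" using inW \<open>{1..n} \<subseteq> W\<close> by auto
          thus "x l < 0" using False by (simp add: zero_less_mult_iff)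
        qed
        hence "(\<Sum>j=1..n. - x j) > 0" using assms by (intro sum_pos) auto
        thus False using sumx by (simp add: sum_negf)
      qed
    next
      case False
      then obtain l where l: "l \<in> {1..n}" "l \<notin> W" by blast
      hence lD: "\<bar>real k - real l\<bar> * D \<ge> M^2 / 4" by (simp add: W_def)
      have Dpos: "D > 0"
      proof (rule ccontr)
        assume "\<not> D > 0" hence "D = 0" using D0 by simp
        thus False using lD Mpos by simp
      qed
      define \<rho> where "\<rho> = M^2 / (4 * D)"
      have rho0: "\<rho> > 0" using Mpos Dpos by (simp add: \<rho>_def)
      have rhokl: "\<rho> \<le> \<bar>real k - real l\<bar>" using lD Dpos by (simp add: \<rho>_def field_simps)
      define q where "q = nat \<lceil>\<rho>\<rceil>"
      have qge: "real q \<ge> \<rho>" unfolding q_def by linarith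
      have dlt: "real d < \<rho>" if "d < q" for d using that unfolding q_def by linarith
      have dW: "\<bar>real d\<bar> * D < M^2 / 4" if "real d < \<rho>" for d :: nat
      proof -
        have "real d * D < \<rho> * D" using that Dpos by (simp add: mult_strict_right_mono)
        also have "\<rho> * D = M^2 / 4" using Dpos by (simp add: \<rho>_def)
        finally show ?thesis by simp
      qed
      obtain Q where Q: "Q \<subseteq> W" "card Q = q" "finite Q"
      proof (cases "k < l")
        case True
        let ?Q = "(\<lambda>d. k + d) ` {..<q}"
        have "?Q \<subseteq> W"
        proof
          fix j assume "j \<in> ?Q"
          then obtain d where d: "d < q" "j = k + d" by auto
          have "real d < real l - real k" using dlt[OF d(1)] rhokl True by simp
          hence "j \<in> {1..n}" using d k l by auto
          moreover have "\<bar>real k - real j\<bar> * D < M^2 / 4" using dW[OF dlt[OF d(1)]] d by simp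
          ultimately show "j \<in> W" by (simp add: W_def)
        qed
        moreover have "card ?Q = q" by (simp add: card_image)
        ultimately show ?thesis using that by blast
      next
        case False
        have "l \<noteq> k" using l(2) k(1) Mpos by (auto simp: W_def)
        hence lk: "l < k" using False by simp
        let ?Q = "(\<lambda>d. k - d) ` {..<q}"
        have "?Q \<subseteq> W"
        proof
          fix j assume "j \<in> ?Q"
          then obtain d where d: "d < q" "j = k - d" by auto
          have "real d < real k - real l" using dlt[OF d(1)] rhokl lk by simp
          hence dk: "d < k - l" by linarith
          hence "j \<in> {1..n}" using d k l by auto
          moreover have "\<bar>real k - real j\<bar> = real d" using d dk by (simp add: of_nat_diff)
          moreover have "real d * D < M^2 / 4" using dW[OF dlt[OF d(1)]] by simp
          ultimately show "j \<in> W" by (simp add: W_def)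
        qed
        moreover have "card ?Q = q"
        proof -
          have "inj_on (\<lambda>d. k - d) {..<q}"
          proof (rule inj_onI)
            fix a b assume "a \<in> {..<q}" "b \<in> {..<q}" "k - a = k - b"
            moreover have "real a < real k - real l" "real b < real k - real l"
              using dlt \<open>a \<in> {..<q}\<close> \<open>b \<in> {..<q}\<close> rhokl lk by fastforce+
            ultimately show "a = b" by linarith
          qed
          thus ?thesis by (simp add: card_image)
        qed
        ultimately show ?thesis using that by blast
      qed
      have "real q * (M / 2) = (\<Sum>j\<in>Q. M / 2)" using Q by simp
      also have "\<dots> \<le> (\<Sum>j\<in>Q. \<bar>x j\<bar>)" by (rule sum_mono) (use inW Q in \<open>auto intro: less_imp_le\<close>)
      also have "\<dots> \<le> (\<Sum>j=1..n. \<bar>x j\<bar>)" by (rule sum_mono2) (use Q in \<open>auto simp: W_def\<close>)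
      also have "\<dots> \<le> 2" by (rule L1)
      finally have "real q * (M / 2) \<le> 2" .
      moreover have "\<rho> * (M / 2) \<le> real q * (M / 2)" using qge Mpos by (simp add: mult_right_mono)
      ultimately have "\<rho> * (M / 2) \<le> 2" by linarith
      hence "M^3 \<le> 16 * D" using Dpos by (simp add: \<rho>_def field_simps power2_eq_square power3_eq_cube)
      thus False using lt by simp
    qed
  qed
  have "(Yf n v)^3 \<le> (2 * M)^3" using Y2M Y0 by (rule power_mono)
  also have "\<dots> = 8 * M^3" by simp
  also have "\<dots> \<le> 128 * Dir n v" using key by (simp add: D_def)
  finally show ?thesis .
qed

lemma EAvg_diff:
  assumes "n \<ge> 2"
  shows "EAvg n t (\<lambda>v. F v - c * G v) = EAvg n t F - c * EAvg n t G"
  unfolding EAvg_def by (simp add: sum_subtractf sum_distrib_left diff_divide_distrib)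

lemma EAvg_nonneg:
  assumes "n \<ge> 2" "\<And>v. good n v \<Longrightarrow> F v \<ge> 0"
  shows "EAvg n t F \<ge> 0"
proof -
  have "EAvg n t (\<lambda>v. 0 * F v + 0) \<le> EAvg n t F" by (rule EAvg_mono[OF assms(1)]) (use assms(2) in simp)
  thus ?thesis using EAvg_lin[OF assms(1), where a=0 and F=F and b=0 and t=t] by simp
qed

lemma EAvg_cube:
  assumes "n \<ge> 2" "\<And>v. good n v \<Longrightarrow> F v \<ge> 0"
  shows "(EAvg n t F)^3 \<le> EAvg n t (\<lambda>v. (F v)^3)"
proof -
  define \<mu> where "\<mu> = EAvg n t F"
  have m0: "\<mu> \<ge> 0" unfolding \<mu>_def by (rule EAvg_nonneg[OF assms])
  have "EAvg n t (\<lambda>v. (3 * \<mu>^2) * F v + (- 2 * \<mu>^3)) \<le> EAvg n t (\<lambda>v. (F v)^3)"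
  proof (rule EAvg_mono[OF assms(1)])
    fix v assume "good n v"
    hence f0: "F v \<ge> 0" by (rule assms(2))
    have "0 \<le> (F v - \<mu>)^2 * (F v + 2 * \<mu>)" using f0 m0 by simp
    thus "3 * \<mu>^2 * F v + - 2 * \<mu>^3 \<le> (F v)^3"
      by (simp add: power2_eq_square power3_eq_cube algebra_simps)
  qed
  moreover have "EAvg n t (\<lambda>v. (3 * \<mu>^2) * F v + (- 2 * \<mu>^3)) = \<mu>^3"
    by (subst EAvg_lin[OF assms(1)]) (simp add: \<mu>_def power2_eq_square power3_eq_cube)
  ultimately show ?thesis by (simp add: \<mu>_def)
qed

lemma EAvg_square:
  assumes "n \<ge> 2"
  shows "(EAvg n t F)^2 \<le> EAvg n t (\<lambda>v. (F v)^2)"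
proof -
  define \<mu> where "\<mu> = EAvg n t F"
  have "EAvg n t (\<lambda>v. (2 * \<mu>) * F v + (- (\<mu>^2))) \<le> EAvg n t (\<lambda>v. (F v)^2)"
  proof (rule EAvg_mono[OF assms(1)])
    fix v
    have "0 \<le> (F v - \<mu>)^2" by simp
    thus "2 * \<mu> * F v + - (\<mu>^2) \<le> (F v)^2"
      by (simp add: power2_eq_square algebra_simps)
  qed
  moreover have "EAvg n t (\<lambda>v. (2 * \<mu>) * F v + (- (\<mu>^2))) = \<mu>^2"
    by (subst EAvg_lin[OF assms(1)]) (simp add: \<mu>_def power2_eq_square)
  ultimately show ?thesis by (simp add: \<mu>_def)
qed

lemma Y_step:
  assumes "n \<ge> 2"
  shows "EAvg n (Suc t) (Yf n) \<le> EAvg n t (Yf n) - (1 / (256 * real (n - 1))) * (EAvg n t (Yf n))^3"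
proof -
  have m: "real (n - 1) > 0" using assms by simp
  have "EAvg n (Suc t) (Yf n) = EAvg n t (\<lambda>v. (\<Sum>i\<in>{1..<n}. Yf n (avg_step i v)) / real (n - 1))"
    by (rule EAvg_Suc[OF assms])
  also have "\<dots> \<le> EAvg n t (\<lambda>v. Yf n v - (1 / (256 * real (n - 1))) * (Yf n v)^3)"
  proof (rule EAvg_mono[OF assms])
    fix v assume g: "good n v"
    have "(\<Sum>i\<in>{1..<n}. Yf n (avg_step i v)) / real (n - 1) = Yf n v - Dir n v / (2 * real (n - 1))"
      using Yf_sum_step[OF assms, of v] m by (simp add: diff_divide_distrib)
    also have "Dir n v / (2 * real (n - 1)) \<ge> (Yf n v)^3 / 128 / (2 * real (n - 1))"
      using nash[OF g assms] m by (intro divide_right_mono) auto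
    ultimately show "(\<Sum>i\<in>{1..<n}. Yf n (avg_step i v)) / real (n - 1) \<le> Yf n v - (1 / (256 * real (n - 1))) * (Yf n v)^3"
      by simp
  qed
  also have "\<dots> = EAvg n t (Yf n) - (1 / (256 * real (n - 1))) * EAvg n t (\<lambda>v. (Yf n v)^3)"
    by (rule EAvg_diff[OF assms])
  also have "\<dots> \<le> EAvg n t (Yf n) - (1 / (256 * real (n - 1))) * (EAvg n t (Yf n))^3"
  proof -
    have "(EAvg n t (Yf n))^3 \<le> EAvg n t (\<lambda>v. (Yf n v)^3)"
      by (rule EAvg_cube[OF assms]) (simp add: Yf_def sum_nonneg)
    moreover have "1 / (256 * real (n - 1)) \<ge> 0" using m by simp
    ultimately have "(1 / (256 * real (n - 1))) * (EAvg n t (Yf n))^3 \<le> (1 / (256 * real (n - 1))) * EAvg n t (\<lambda>v. (Yf n v)^3)"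
      by (rule mult_left_mono)
    thus ?thesis by (rule diff_left_mono)
  qed
  finally show ?thesis .
qed

lemma decay:
  fixes y :: "nat \<Rightarrow> real"
  assumes pos: "\<And>t. y t \<ge> 0" and a: "a > 0" and step: "\<And>t. y (Suc t) \<le> y t - a * (y t)^3"
  shows "y t = 0 \<or> 2 * a * real t \<le> 1 / (y t)^2"
proof (induction t)
  case 0 thus ?case by simp
next
  case (Suc t)
  show ?case
  proof (cases "y (Suc t) = 0")
    case True thus ?thesis by simp
  next
    case False
    hence y1: "y (Suc t) > 0" using pos[of "Suc t"] by simp
    define u where "u = a * (y t)^2"
    have y0: "y t > 0"
    proof -
      have "a * (y t)^3 \<ge> 0" using a pos[of t] by simp
      thus ?thesis using step[of t] y1 by linarith
    qed
    have st: "y (Suc t) \<le> y t * (1 - u)" using step[of t] by (simp add: u_def power3_eq_cube power2_eq_square algebra_simps)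
    have u0: "u \<ge> 0" using a by (simp add: u_def)
    have u1: "1 - u > 0"
    proof (rule ccontr)
      assume "\<not> 1 - u > 0"
      hence "y t * (1 - u) \<le> 0" using y0 by (simp add: mult_nonneg_nonpos)
      thus False using st y1 by linarith
    qed
    have "(y (Suc t))^2 \<le> (y t * (1 - u))^2" using st y1 by (intro power_mono) auto
    hence "(y (Suc t))^2 * (1 + 2 * u) \<le> (y t * (1 - u))^2 * (1 + 2 * u)" using u0 by (intro mult_right_mono) auto
    also have "(y t * (1 - u))^2 * (1 + 2 * u) = (y t)^2 * (1 - u^2 * (3 - 2 * u))"
      by (simp add: power2_eq_square algebra_simps)
    also have "\<dots> \<le> (y t)^2"
    proof -
      have "u^2 * (3 - 2 * u) \<ge> 0" using u0 u1 by simp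
      thus ?thesis by (simp add: mult_left_le)
    qed
    finally have A: "(y (Suc t))^2 * (1 + 2 * u) \<le> (y t)^2" .
    have "1 / (y t)^2 + 2 * a = (1 + 2 * u) / (y t)^2" using y0 by (simp add: u_def field_simps)
    also have "\<dots> \<le> 1 / (y (Suc t))^2" using A y0 y1 by (simp add: field_simps)
    finally have B: "1 / (y t)^2 + 2 * a \<le> 1 / (y (Suc t))^2" .
    have "2 * a * real t \<le> 1 / (y t)^2" using Suc y0 by simp
    hence "2 * a * real (Suc t) \<le> 1 / (y (Suc t))^2" using B by (simp add: algebra_simps)
    thus ?thesis by simp
  qed
qed

lemma dist_sq:
  assumes "n \<ge> 1"
  shows "(dist1_bar n v)^2 \<le> real n * Yf n v"
  using cs_sum[of "{1..n}" "\<lambda>j. \<bar>v j - 1 / real n\<bar>"] by (simp add: dist1_bar_def Yf_def)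

lemma upper_bound:
  assumes "n \<ge> 2" "t \<ge> 1"
  shows "(exp_dist n t)^4 \<le> 128 * real n ^ 3 / real t"
proof -
  define y where "y t = EAvg n t (Yf n)" for t
  define a where "a = 1 / (256 * real (n - 1))"
  have a: "a > 0" using assms by (simp add: a_def)
  have ypos: "y t \<ge> 0" for t unfolding y_def by (rule EAvg_nonneg[OF assms(1)]) (simp add: Yf_def sum_nonneg)
  have ystep: "y (Suc t) \<le> y t - a * (y t)^3" for t unfolding y_def a_def by (rule Y_step[OF assms(1)])
  have yt: "(y t)^2 \<le> 128 * real n / real t"
  proof (cases "y t = 0")
    case True thus ?thesis by simp
  next
    case False
    hence "2 * a * real t \<le> 1 / (y t)^2" using decay[where y=y and a=a, OF ypos a ystep, of t] by simp
    hence "(y t)^2 \<le> 1 / (2 * a * real t)" using False a assms by (simp add: field_simps)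
    also have "1 / (2 * a * real t) = 128 * real (n - 1) / real t" by (simp add: a_def)
    also have "\<dots> \<le> 128 * real n / real t" by (intro divide_right_mono) auto
    finally show ?thesis .
  qed
  have e0: "exp_dist n t \<ge> 0" unfolding exp_dist_Ex
    by (rule EAvg_nonneg[OF assms(1)]) (simp add: dist1_bar_def sum_nonneg)
  have "(exp_dist n t)^2 \<le> EAvg n t (\<lambda>v. (dist1_bar n v)^2)" unfolding exp_dist_Ex by (rule EAvg_square[OF assms(1)])
  also have "\<dots> \<le> EAvg n t (\<lambda>v. real n * Yf n v + 0)"
    by (rule EAvg_mono[OF assms(1)]) (use dist_sq assms in auto)
  also have "\<dots> = real n * y t" by (subst EAvg_lin[OF assms(1)]) (simp add: y_def)
  finally have e2: "(exp_dist n t)^2 \<le> real n * y t" .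
  have "(exp_dist n t)^4 = ((exp_dist n t)^2)^2" by simp
  also have "\<dots> \<le> (real n * y t)^2" using e2 by (intro power_mono) auto
  also have "\<dots> = real n ^ 2 * (y t)^2" by (simp add: power_mult_distrib)
  also have "\<dots> \<le> real n ^ 2 * (128 * real n / real t)" using yt by (intro mult_left_mono) auto
  also have "\<dots> = 128 * real n ^ 3 / real t" by (simp add: power2_eq_square power3_eq_cube)
  finally show ?thesis .
qed

lemma lin_aux: "2 - a - b \<le> (e::real) \<Longrightarrow> a \<le> 1/2 + 2/9 \<Longrightarrow> b \<le> 9/128 \<Longrightarrow> \<epsilon> < 1 \<Longrightarrow> \<epsilon> < e"
  by linarith

lemma lower_main:
  assumes "n \<ge> 2" "real t < real n ^ 3 / 512" "\<epsilon> < 1"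
  shows "exp_dist n t > \<epsilon>"
proof (cases "t = 0")
  case True
  have "exp_dist n t \<ge> 2 - 2 * real (nat \<lceil>1::real\<rceil>) / real n - 2 * (real t / real (n - 1)) / 1^2"
    using exp_dist_lower[OF assms(1), of 1 t] by simp
  hence "exp_dist n t \<ge> 2 - 2 / real n" using True by simp
  moreover have "2 / real n \<le> 1" using assms(1) by simp
  ultimately show ?thesis using assms(3) by linarith
next
  case False
  hence t1: "real t \<ge> 1" by simp
  have n9: "n \<ge> 9"
  proof (rule ccontr)
    assume "\<not> n \<ge> 9"
    hence "n \<le> 8" by simp
    hence "real n ^ 3 \<le> 8 ^ 3" by (intro power_mono) auto
    thus False using t1 assms(2) by simp
  qed
  define R where "R = real n / 4"
  have R0: "R > 0" using n9 by (simp add: R_def)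
  have cR: "real (nat \<lceil>R\<rceil>) \<le> R + 1" using R0 by linarith
  have n0: "real n \<ge> 9" using n9 by simp
  have T1: "2 * real (nat \<lceil>R\<rceil>) / real n \<le> 1 / 2 + 2 / 9"
  proof -
    have "2 * real (nat \<lceil>R\<rceil>) / real n \<le> 2 * (R + 1) / real n"
      using cR n0 by (intro divide_right_mono) auto
    also have "\<dots> = 1 / 2 + 2 / real n" using n0 by (simp add: R_def field_simps)
    also have "2 / real n \<le> 2 / 9" using n0 by (intro divide_left_mono) auto
    finally show ?thesis by simp
  qed
  have T2: "2 * (real t / real (n - 1)) / R^2 \<le> 9 / 128"
  proof -
    have m: "real (n - 1) = real n - 1" using n9 by simp
    have m8: "real n - 1 \<ge> 8 * real n / 9" using n0 by simp
    have "2 * (real t / real (n - 1)) / R^2 = 32 * real t / ((real n - 1) * real n ^ 2)"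
      using n0 by (simp add: R_def m field_simps power2_eq_square)
    also have "\<dots> \<le> 32 * (real n ^ 3 / 512) / ((real n - 1) * real n ^ 2)"
      using assms(2) n0 by (intro divide_right_mono) auto
    also have "\<dots> = real n / (16 * (real n - 1))" using n0 by (simp add: field_simps power2_eq_square power3_eq_cube)
    also have "\<dots> \<le> real n / (16 * (8 * real n / 9))" using m8 n0 by (intro divide_left_mono) auto
    also have "\<dots> = 9 / 128" using n0 by (simp add: field_simps)
    finally show ?thesis .
  qed
  have "exp_dist n t \<ge> 2 - 2 * real (nat \<lceil>R\<rceil>) / real n - 2 * (real t / real (n - 1)) / R^2"
    by (rule exp_dist_lower[OF assms(1) R0])
  from lin_aux[OF this T1 T2 assms(3)] show ?thesis .
qed

theorem proposition7:
  fixes \<epsilon> :: real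
  assumes "0 < \<epsilon>" and "\<epsilon> < 1"
  shows "\<exists>c C. 0 < c \<and> c \<le> C \<and>
           (\<forall>n::nat. n \<ge> 2 \<longrightarrow>
              (\<exists>t. exp_dist n t \<le> \<epsilon>) \<and>
              c * real n ^ 3 \<le> real (mix_time n \<epsilon>) \<and>
              real (mix_time n \<epsilon>) \<le> C * real n ^ 3)"
proof -
  have main: "\<forall>n::nat. n \<ge> 2 \<longrightarrow>
              (\<exists>t. exp_dist n t \<le> \<epsilon>) \<and>
              1 / 512 * real n ^ 3 \<le> real (mix_time n \<epsilon>) \<and>
              real (mix_time n \<epsilon>) \<le> (128 / \<epsilon>^4 + 1) * real n ^ 3"
  proof (intro allI impI)
  fix n :: nat assume n: "n \<ge> 2"
  have n1: "real n ^ 3 \<ge> 1" using n by simp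
  have e4: "\<epsilon>^4 > 0" using assms by simp
  define T where "T = nat \<lceil>128 * real n ^ 3 / \<epsilon>^4\<rceil>"
  have Tge: "real T \<ge> 128 * real n ^ 3 / \<epsilon>^4" unfolding T_def by linarith
  have Tle: "real T \<le> 128 * real n ^ 3 / \<epsilon>^4 + 1" unfolding T_def
    using e4 n1 by (simp add: of_nat_nat)
  have Tpos: "128 * real n ^ 3 / \<epsilon>^4 > 0" using e4 n by (intro divide_pos_pos) auto
  have T1: "T \<ge> 1" using Tge Tpos by simp
  have "(exp_dist n T)^4 \<le> 128 * real n ^ 3 / real T" by (rule upper_bound[OF n T1])
  also have "\<dots> \<le> \<epsilon>^4"
  proof -
    have "128 * real n ^ 3 \<le> \<epsilon>^4 * real T" using Tge e4 by (simp add: field_simps)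
    thus ?thesis using T1 by (simp add: field_simps)
  qed
  finally have "(exp_dist n T)^4 \<le> \<epsilon>^4" .
  hence ET: "exp_dist n T \<le> \<epsilon>" using power_le_imp_le_base[of "exp_dist n T" 3 \<epsilon>] assms(1)
    by (simp add: numeral_eq_Suc)
  hence G1: "\<exists>t. exp_dist n t \<le> \<epsilon>" by blast
  have "mix_time n \<epsilon> \<le> T" unfolding mix_time_def by (rule Least_le) (rule ET)
  hence "real (mix_time n \<epsilon>) \<le> real T" by simp
  also have "\<dots> \<le> 128 * real n ^ 3 / \<epsilon>^4 + real n ^ 3" using Tle n1 by linarith
  also have "\<dots> = (128 / \<epsilon>^4 + 1) * real n ^ 3" by (simp add: field_simps)
  finally have G3: "real (mix_time n \<epsilon>) \<le> (128 / \<epsilon>^4 + 1) * real n ^ 3" .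
  have "exp_dist n (mix_time n \<epsilon>) \<le> \<epsilon>" unfolding mix_time_def by (rule LeastI) (rule ET)
  hence "\<not> real (mix_time n \<epsilon>) < real n ^ 3 / 512" using lower_main[OF n _ assms(2)] by force
  hence G2: "1 / 512 * real n ^ 3 \<le> real (mix_time n \<epsilon>)" by simp
  show "(\<exists>t. exp_dist n t \<le> \<epsilon>) \<and>
              1 / 512 * real n ^ 3 \<le> real (mix_time n \<epsilon>) \<and>
              real (mix_time n \<epsilon>) \<le> (128 / \<epsilon>^4 + 1) * real n ^ 3" using G1 G2 G3 by blast
  qed
  have "(0::real) < 1 / 512" "1 / 512 \<le> 128 / \<epsilon>^4 + 1" using assms by simp_all
  thus ?thesis using main by blast

qed

end
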